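(* Fix a type 1 generator $s=\begin{pmatrix} t+l_i & b\\0&1\end{pmatrix}$ with $1\le i\le d-1$, $b\in\mathbb{Z}_q$, and let $g=\begin{pmatrix}\prod_{k=1}^{d-1}(t+l_k)^{m_k} & R\\0&1\end{pmatrix}\in\Gamma_d(q)$. Decompose $$\prod_{k=1}^{d-1}(t+l_k)^{-m_k}R=R_1+R_2+\dots+R_d$$ and $$(t+l_i)^{-1}\prod_{k=1}^{d-1}(t+l_k)^{-m_k}\Big(b\prod_{k=1}^{d-1}(t+l_k)^{m_k}+R\Big)=b(t+l_i)^{-1}+(t+l_i)^{-1}(R_1+\dots+R_d)=Q_1+Q_2+\dots+Q_d$$ using the decomposition described in the context. Then: (1) if $n\ne i,d$, the minimal degree of $R_n$ is the same as the minimal degree of $Q_n$; (2) if $n=d$, the minimal degree of $Q_d$ is one greater than the minimal degree of $R_d$; (3) if $n=i$, the minimal degree of $Q_i$ is one less than the minimal degree of $R_i$.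
   Context: Standing assumptions: $q\ge2$, $d\ge3$, coefficients in $\mathbb{Z}_q$, and $l_1,\dots,l_{d-1}\in\mathbb{Z}_q$ distinct, each invertible, with all differences $l_i-l_j$ ($i\ne j$) invertible. $\mathcal{R}_d=\mathbb{Z}_q[t,(t+l_1)^{-1},\dots,(t+l_{d-1})^{-1}]$, and $\Gamma_d(q)$ is the group of matrices $\begin{pmatrix}\prod_{k=1}^{d-1}(t+l_k)^{m_k} & P\\0&1\end{pmatrix}$ with $m_k\in\mathbb{Z}$, $P\in\mathcal{R}_d$. Decomposition (known fact): every element of $\mathcal{R}_d$ can be written uniquely as $P_1+\dots+P_d$, where for $1\le n\le d-1$, $P_n$ is a polynomial in the variable $t+l_n$ all of whose terms have negative degree, and $P_d$ is a polynomial in the variable $t^{-1}$ all of whose terms have nonpositive degree. The minimal degree of $R_n,Q_n$ for $n\le d-1$ is taken as a polynomial in $t+l_n$, and for $n=d$ as a polynomial in $t^{-1}$. *)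

theory Defs
  imports "Berlekamp_Zassenhaus.Finite_Field" "HOL-Computational_Algebra.Polynomial"
begin

text \<open>Coefficients: the type 'q mod_ring (with 'q :: nontriv) is Z_q for q = CARD('q) >= 2.
  Elements of R_d = Z_q[t, (t+l_1)^-1, ..., (t+l_{d-1})^-1] are represented as formal
  fractions (N, D) of polynomials in t, with D a product of powers of the (t+l_k);
  two fractions denote the same element of the localisation iff N1*D2 = N2*D1
  (the t+l_k are monic, hence non-zero-divisors).\<close>

type_synonym 'a frac = "'a poly \<times> 'a poly"

definition lin :: "'a::comm_ring_1 \<Rightarrow> 'a poly" where
  "lin a = [:a, 1:]"

definition frac_eq :: "'a::comm_ring_1 frac \<Rightarrow> 'a frac \<Rightarrow> bool" where
  "frac_eq x y \<longleftrightarrow> fst x * snd y = fst y * snd x"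

definition fadd :: "'a::comm_ring_1 frac \<Rightarrow> 'a frac \<Rightarrow> 'a frac" where
  "fadd x y = (fst x * snd y + fst y * snd x, snd x * snd y)"

definition fmul :: "'a::comm_ring_1 frac \<Rightarrow> 'a frac \<Rightarrow> 'a frac" where
  "fmul x y = (fst x * fst y, snd x * snd y)"

definition fsum :: "'b set \<Rightarrow> ('b \<Rightarrow> 'a::comm_ring_1 frac) \<Rightarrow> 'a frac" where
  "fsum A f = ((\<Sum>n\<in>A. fst (f n) * (\<Prod>m\<in>A - {n}. snd (f m))), (\<Prod>n\<in>A. snd (f n)))"

definition fprod :: "'b set \<Rightarrow> ('b \<Rightarrow> 'a::comm_ring_1 frac) \<Rightarrow> 'a frac" where
  "fprod A f = ((\<Prod>n\<in>A. fst (f n)), (\<Prod>n\<in>A. snd (f n)))"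

definition fpoly :: "'a::comm_ring_1 poly \<Rightarrow> 'a frac" where
  "fpoly p = (p, 1)"

definition lpow :: "'a::comm_ring_1 \<Rightarrow> int \<Rightarrow> 'a frac" where
  "lpow a m = (if 0 \<le> m then (lin a ^ nat m, 1) else (1, lin a ^ nat (- m)))"

definition in_Rd :: "(nat \<Rightarrow> 'a::comm_ring_1) \<Rightarrow> nat \<Rightarrow> 'a frac \<Rightarrow> bool" where
  "in_Rd l d x \<longleftrightarrow> (\<exists>e::nat \<Rightarrow> nat. snd x = (\<Prod>k\<in>{1..d-1}. lin (l k) ^ e k))"

text \<open>A polynomial c in the variable u = (t+a)^-1 (with zero constant term, i.e. only
  negative powers of t+a) denotes the element sum_j coeff c j * (t+a)^(-j).\<close>
definition negpart :: "'a::comm_ring_1 \<Rightarrow> 'a poly \<Rightarrow> 'a frac" where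
  "negpart a c = ((\<Sum>j\<le>degree c. smult (coeff c j) (lin a ^ (degree c - j))), lin a ^ degree c)"

text \<open>The n-th summand of the decomposition: for n <= d-1 a polynomial in (t+l_n)^-1
  given by its coefficient polynomial c (coefficient of (t+l_n)^-j is coeff c j);
  for n = d a polynomial in t (= polynomial in t^-1 of nonpositive degree),
  the coefficient of t^j = (t^-1)^(-j) being coeff c j.\<close>
definition dpart :: "(nat \<Rightarrow> 'a::comm_ring_1) \<Rightarrow> nat \<Rightarrow> nat \<Rightarrow> 'a poly \<Rightarrow> 'a frac" where
  "dpart l d n c = (if n = d then fpoly c else negpart (l n) c)"

definition is_decomp :: "(nat \<Rightarrow> 'a::comm_ring_1) \<Rightarrow> nat \<Rightarrow> 'a frac \<Rightarrow> (nat \<Rightarrow> 'a poly) \<Rightarrow> bool" where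
  "is_decomp l d x P \<longleftrightarrow> (\<forall>n\<in>{1..d-1}. coeff (P n) 0 = 0) \<and>
     frac_eq x (fsum {1..d} (\<lambda>n. dpart l d n (P n)))"

text \<open>Minimal degree of the n-th summand: for n <= d-1 as a polynomial in t+l_n (the term
  coeff c j * (t+l_n)^-j has degree -j); for n = d as a polynomial in t^-1 (the term
  coeff c j * t^j has degree -j). In both cases it is the minimum of -j over the nonzero
  coefficients; the zero summand is given minimal degree 0 by convention.\<close>
definition min_deg :: "'a::zero poly \<Rightarrow> int" where
  "min_deg c = (if c = 0 then 0 else Min {- int j | j. coeff c j \<noteq> 0})"

definition invertible_el :: "'a::comm_ring_1 \<Rightarrow> bool" where
  "invertible_el x \<longleftrightarrow> (\<exists>u. x * u = 1)"

end

theory Submission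
  imports Defs
begin


definition mnc :: "'a::comm_ring_1 poly \<Rightarrow> bool" where
  "mnc p \<longleftrightarrow> lead_coeff p = 1"

lemma mnc_mult_degree:
  fixes p q :: "'a::comm_ring_1 poly"
  assumes "mnc p" "q \<noteq> 0"
  shows "degree (p * q) = degree p + degree q" "lead_coeff (p*q) = lead_coeff q"
proof -
  have c: "coeff (p * q) (degree p + degree q) = lead_coeff q"
    using coeff_mult_degree_sum[of p q] assms(1) by (simp add: mnc_def)
  have "lead_coeff q \<noteq> 0" using assms(2) by simp
  hence "degree p + degree q \<le> degree (p*q)" using c by (metis le_degree)
  thus d: "degree (p * q) = degree p + degree q" using degree_mult_le[of p q] by simp
  show "lead_coeff (p*q) = lead_coeff q" using c d by simp
qed

lemma mnc_mult: "mnc p \<Longrightarrow> mnc q \<Longrightarrow> mnc (p * (q::'a::comm_ring_1 poly))"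
proof -
  assume a: "mnc p" "mnc q"
  hence "q \<noteq> 0" by (auto simp: mnc_def)
  thus ?thesis using mnc_mult_degree(2)[OF a(1)] a(2) by (simp add: mnc_def)
qed

lemma mnc_one: "mnc (1::'a::comm_ring_1 poly)" by (simp add: mnc_def)

lemma mnc_power: "mnc p \<Longrightarrow> mnc (p ^ (k::nat))"
  by (induction k) (auto simp: mnc_one mnc_mult)

lemma mnc_prod: "(\<And>x. x \<in> A \<Longrightarrow> mnc (f x)) \<Longrightarrow> mnc (prod f A)"
  by (induction A rule: infinite_finite_induct) (auto simp: mnc_one mnc_mult)

lemma mnc_lin: "mnc (lin a)" by (simp add: mnc_def lin_def)
lemma degree_lin[simp]: "degree (lin a) = 1" by (simp add: lin_def)

lemma mnc_cancel: "mnc p \<Longrightarrow> p * x = 0 \<Longrightarrow> x = (0::'a::comm_ring_1 poly)"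
  using mnc_mult_degree(2) by (fastforce simp: mnc_def)

lemma mnc_cancel_eq: "mnc p \<Longrightarrow> p * x = p * y \<Longrightarrow> x = (y::'a::comm_ring_1 poly)"
  using mnc_cancel[of p "x - y"] by (simp add: right_diff_distrib)

lemma mnc_dvd_cancel: "mnc p \<Longrightarrow> p * x dvd p * y \<Longrightarrow> x dvd (y::'a::comm_ring_1 poly)"
proof -
  assume m: "mnc p" and "p * x dvd p * y"
  then obtain k where "p * y = p * x * k" by (auto elim: dvdE)
  hence "y = x * k" using mnc_cancel_eq[OF m, of y "x*k"] by (simp add: mult.assoc)
  thus ?thesis by simp
qed

definition cpr :: "'a::comm_ring_1 poly \<Rightarrow> 'a poly \<Rightarrow> bool" where
  "cpr x y \<longleftrightarrow> (\<exists>u v. u * x + v * y = 1)"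

lemma cpr_sym: "cpr x y \<Longrightarrow> cpr y x"
  unfolding cpr_def by (metis add.commute)

lemma cpr_one: "cpr 1 y" unfolding cpr_def by (rule exI[of _ 1], rule exI[of _ 0]) simp

lemma cpr_mult: "cpr x z \<Longrightarrow> cpr y z \<Longrightarrow> cpr (x * y) z"
proof -
  assume "cpr x z" "cpr y z"
  then obtain u v u' v' where e: "u * x + v * z = 1" "u' * y + v' * z = 1" by (auto simp: cpr_def)
  have "(u * x + v * z) * (u' * y + v' * z) = 1" using e by simp
  hence "(u*u') * (x*y) + (u*x*v' + v*(u'*y) + v*v'*z) * z = 1"
    by (simp add: algebra_simps)
  thus ?thesis unfolding cpr_def by blast
qed

lemma cpr_power: "cpr x z \<Longrightarrow> cpr (x ^ k) z"
  by (induction k) (auto simp: cpr_one cpr_mult)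

lemma cpr_prod: "(\<And>a. a \<in> A \<Longrightarrow> cpr (f a) z) \<Longrightarrow> cpr (prod f A) z"
  by (induction A rule: infinite_finite_induct) (auto simp: cpr_one cpr_mult)

lemma cpr_dvd: "cpr x z \<Longrightarrow> z dvd x * y \<Longrightarrow> z dvd y"
proof -
  assume "cpr x z" "z dvd x * y"
  then obtain u v k where e: "u * x + v * z = 1" "x * y = z * k" by (auto simp: cpr_def elim!: dvdE)
  have "y = (u * x + v * z) * y" using e by simp
  also have "\<dots> = u * (x * y) + z * (v * y)" by (simp add: algebra_simps)
  also have "\<dots> = z * (u * k + v * y)" using e by (simp add: algebra_simps)
  finally show ?thesis by (rule dvdI)
qed

lemma cpr_lin:
  assumes "(a - c) * w = (1::'a::comm_ring_1)"
  shows "cpr (lin a) (lin c)"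
proof -
  have "[:w:] * lin a + (- [:w:]) * lin c = [:(a - c) * w:]"
    by (simp add: lin_def algebra_simps)
  also have "\<dots> = 1" using assms by (simp add: one_pCons)
  finally show ?thesis unfolding cpr_def by blast
qed

lemma lin_dvd_const: "lin a dvd [:c:] \<Longrightarrow> c = (0::'a::comm_ring_1)"
proof -
  assume "lin a dvd [:c:]"
  then obtain k where k: "[:c:] = lin a * k" by (auto elim: dvdE)
  show ?thesis
  proof (cases "k = 0")
    case True thus ?thesis using k by simp
  next
    case False
    hence "degree (lin a * k) = 1 + degree k" using mnc_mult_degree(1)[OF mnc_lin] by simp
    moreover have "degree (lin a * k) = 0" using k by (metis degree_pCons_0)
    ultimately show ?thesis by simp
  qed
qed



lemma fsum_split:
  assumes "finite A" "n \<in> A"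
  shows "fst (fsum A f) = fst (f n) * (\<Prod>m\<in>A - {n}. snd (f m))
     + snd (f n) * (\<Sum>k\<in>A - {n}. fst (f k) * (\<Prod>m\<in>A - {k} - {n}. snd (f m)))"
    "snd (fsum A f) = snd (f n) * (\<Prod>m\<in>A - {n}. snd (f m))"
proof -
  have "fst (fsum A f) = fst (f n) * (\<Prod>m\<in>A - {n}. snd (f m))
     + (\<Sum>k\<in>A - {n}. fst (f k) * (\<Prod>m\<in>A - {k}. snd (f m)))"
    unfolding fsum_def using assms by (simp add: sum.remove)
  also have "(\<Sum>k\<in>A - {n}. fst (f k) * (\<Prod>m\<in>A - {k}. snd (f m)))
     = (\<Sum>k\<in>A - {n}. snd (f n) * (fst (f k) * (\<Prod>m\<in>A - {k} - {n}. snd (f m))))"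
  proof (rule sum.cong[OF refl])
    fix k assume k: "k \<in> A - {n}"
    have "(\<Prod>m\<in>A - {k}. snd (f m)) = snd (f n) * (\<Prod>m\<in>A - {k} - {n}. snd (f m))"
      using assms k by (subst prod.remove[of _ n]) auto
    thus "fst (f k) * (\<Prod>m\<in>A - {k}. snd (f m)) = snd (f n) * (fst (f k) * (\<Prod>m\<in>A - {k} - {n}. snd (f m)))"
      by (simp add: algebra_simps)
  qed
  finally show "fst (fsum A f) = fst (f n) * (\<Prod>m\<in>A - {n}. snd (f m))
     + snd (f n) * (\<Sum>k\<in>A - {n}. fst (f k) * (\<Prod>m\<in>A - {k} - {n}. snd (f m)))"
    by (simp add: sum_distrib_left)
  show "snd (fsum A f) = snd (f n) * (\<Prod>m\<in>A - {n}. snd (f m))"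
    unfolding fsum_def using assms by (simp add: prod.remove)
qed

lemma min_deg_eq: "min_deg c = - int (degree c)"
proof (cases "c = 0")
  case True thus ?thesis by (simp add: min_deg_def)
next
  case False
  let ?S = "{- int j | j. coeff c j \<noteq> 0}"
  have fin: "finite ?S"
  proof -
    have "?S \<subseteq> (\<lambda>j. - int j) ` {..degree c}" using le_degree by fastforce
    thus ?thesis by (rule finite_subset) simp
  qed
  have mem: "- int (degree c) \<in> ?S" using False by auto
  have lb: "\<forall>x\<in>?S. - int (degree c) \<le> x" using le_degree by fastforce
  have "Min ?S = - int (degree c)"
    using fin mem lb by (intro Min_eqI) auto
  thus ?thesis using False by (simp add: min_deg_def)
qed

lemma negpart_num:
  "\<exists>Z. fst (negpart a c) = [:coeff c (degree c):] + lin a * Z"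
proof (cases "degree c")
  case 0
  thus ?thesis unfolding negpart_def by (intro exI[of _ 0]) (simp add: one_pCons)
next
  case (Suc k)
  have "fst (negpart a c) = (\<Sum>j\<le>k. smult (coeff c j) (lin a ^ (Suc k - j))) + smult (coeff c (Suc k)) 1"
    unfolding negpart_def using Suc by simp
  also have "(\<Sum>j\<le>k. smult (coeff c j) (lin a ^ (Suc k - j))) = lin a * (\<Sum>j\<le>k. smult (coeff c j) (lin a ^ (k - j)))"
    by (simp add: sum_distrib_left Suc_diff_le mult_smult_right)
  finally show ?thesis using Suc by (intro exI) (simp add: one_pCons add.commute)
qed

lemma negpart_num_degree:
  assumes "coeff c 0 = 0"
  shows "fst (negpart a c) = 0 \<or> degree (fst (negpart a c)) < degree c"
proof (cases "degree c")
  case 0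
  thus ?thesis using assms unfolding negpart_def by simp
next
  case (Suc k)
  have "fst (negpart a c) = (\<Sum>j\<in>{1..Suc k}. smult (coeff c j) (lin a ^ (Suc k - j)))"
    unfolding negpart_def using Suc assms by (simp add: atMost_atLeast0 sum.atLeast_Suc_atMost)
  also have "degree \<dots> \<le> k"
  proof (rule degree_sum_le)
    fix j assume j: "j \<in> {1..Suc k}"
    have "degree (smult (coeff c j) (lin a ^ (Suc k - j))) \<le> degree (lin a ^ (Suc k - j))"
      by (rule degree_smult_le)
    also have "\<dots> \<le> (Suc k - j) * degree (lin a)" using degree_power_le[of "lin a" "Suc k - j"] by (simp add: mult.commute)
    also have "\<dots> \<le> k" using j by (cases j) auto
    finally show "degree (smult (coeff c j) (lin a ^ (Suc k - j))) \<le> k" .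
  qed simp
  finally show ?thesis using Suc by simp
qed



lemma dvd_power_pos: "0 < k \<Longrightarrow> (L::'a::comm_ring_1 poly) dvd L ^ k"
  by (cases k) auto

lemma core:
  fixes X Y :: "'a::comm_ring_1 poly"
  assumes dv: "lin c ^ (a+b) dvd (lin c ^ b * X - lin c ^ (a+e) * Y)"
    and nX: "0 < a \<Longrightarrow> \<not> lin c dvd X" and nY: "0 < b \<Longrightarrow> \<not> lin c dvd Y"
    and ea: "e = 0 \<or> 0 < a"
  shows "b = a + e"
proof (rule ccontr)
  let ?L = "lin c"
  have m: "mnc (?L ^ k)" for k by (intro mnc_power mnc_lin)
  assume ne: "b \<noteq> a + e"
  show False
  proof (cases "b < a + e")
    case True
    hence a0: "0 < a" using ea by auto
    have p1: "?L ^ (a+e) = ?L ^ b * ?L ^ (a+e-b)" using True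
      by (metis power_add le_add_diff_inverse less_imp_le)
    have p2: "?L ^ (a+b) = ?L ^ b * ?L ^ a" by (simp add: power_add mult.commute)
    have "?L ^ b * ?L ^ a dvd ?L ^ b * (X - ?L ^ (a+e-b) * Y)"
      using dv unfolding p1 p2 by (simp add: algebra_simps)
    hence "?L ^ a dvd X - ?L ^ (a+e-b) * Y" by (rule mnc_dvd_cancel[OF m])
    hence d1: "?L dvd X - ?L ^ (a+e-b) * Y" using a0 dvd_power_pos dvd_trans by blast
    have d2: "?L dvd ?L ^ (a+e-b) * Y" using True by (simp add: dvd_power_pos)
    have "?L dvd X" using dvd_add[OF d1 d2] by simp
    thus False using nX a0 by blast
  next
    case False
    hence lt: "a + e < b" using ne by simp
    have p1: "?L ^ b = ?L ^ (a+e) * ?L ^ (b-a-e)" using lt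
      by (metis power_add le_add_diff_inverse less_imp_le diff_diff_left)
    have p2: "?L ^ (a+b) = ?L ^ (a+e) * ?L ^ (b-e)" using lt
      by (metis power_add add.commute add.left_commute le_add_diff_inverse less_imp_le add_lessD1)
    have "?L ^ (a+e) * ?L ^ (b-e) dvd ?L ^ (a+e) * (?L ^ (b-a-e) * X - Y)"
      using dv unfolding p1 p2 by (simp add: algebra_simps)
    hence "?L ^ (b-e) dvd ?L ^ (b-a-e) * X - Y" by (rule mnc_dvd_cancel[OF m])
    hence d1: "?L dvd ?L ^ (b-a-e) * X - Y" using lt dvd_power_pos[of "b-e" ?L] dvd_trans by fastforce
    have d2: "?L dvd ?L ^ (b-a-e) * X" using lt by (simp add: dvd_power_pos)
    have "?L dvd Y" using dvd_diff[OF d2 d1] by simp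
    thus False using nY lt by simp
  qed
qed

lemma core0:
  fixes X Y :: "'a::comm_ring_1 poly"
  assumes dv: "lin c ^ (a+b) dvd (lin c ^ b * X - lin c ^ a * Y)"
    and nX: "0 < a \<Longrightarrow> \<not> lin c dvd X" and nY: "0 < b \<Longrightarrow> \<not> lin c dvd Y"
  shows "b = a"
  using core[of c a b X "0::nat" Y] assms by simp

lemma core1:
  fixes X Y :: "'a::comm_ring_1 poly"
  assumes dv: "lin c ^ (a+b) dvd (lin c ^ b * X - lin c ^ (a+1) * Y)"
    and nX: "0 < a \<Longrightarrow> \<not> lin c dvd X" and nY: "0 < b \<Longrightarrow> \<not> lin c dvd Y"
    and a: "0 < a"
  shows "b = a + 1"
  using core[of c a b X "1::nat" Y] assms by simp



lemma alg1:
  fixes bb P Q WQ WR NR NQ YR YQ Li :: "'a::comm_ring_1"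
  assumes h: "bb*(P*WQ)*(Q*WR) + (NR*WR + Q*YR)*(P*WQ) = Li*(NQ*WQ + P*YQ)*(Q*WR)"
  shows "(WR*WQ)*(P*NR - Q*(Li*NQ)) = (Q*P)*(Li*YQ*WR - bb*WQ*WR - YR*WQ)"
proof -
  have "(WR*WQ)*(P*NR - Q*(Li*NQ)) - (Q*P)*(Li*YQ*WR - bb*WQ*WR - YR*WQ)
     = (bb*(P*WQ)*(Q*WR) + (NR*WR + Q*YR)*(P*WQ)) - Li*(NQ*WQ + P*YQ)*(Q*WR)"
    by (simp add: algebra_simps)
  thus ?thesis using h by simp
qed

lemma alg2:
  fixes bb SQd SRd Rd Qd TR TQ Li :: "'a::comm_ring_1"
  assumes h: "bb*SQd*SRd + (Rd*SRd + TR)*SQd = Li*(Qd*SQd+TQ)*SRd"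
  shows "(Li*Qd - Rd - bb)*(SQd*SRd) = TR*SQd - Li*TQ*SRd"
proof -
  have "(Li*Qd - Rd - bb)*(SQd*SRd) - (TR*SQd - Li*TQ*SRd)
     = Li*(Qd*SQd+TQ)*SRd - (bb*SQd*SRd + (Rd*SRd + TR)*SQd)"
    by (simp add: algebra_simps)
  thus ?thesis using h by simp
qed

lemma alg3:
  fixes A B D N SRn SRd SQn SQd bb Li :: "'a::comm_ring_1"
  assumes h1: "A*N*SRd = SRn*(B*D)" and h2: "A*(bb*B*D + N*A)*SQd = SQn*(Li*(B*(A*D)))"
  shows "(A*B*D)*(bb*SQd*SRd + SRn*SQd) = (A*B*D)*(Li*SQn*SRd)"
proof -
  have "(A*B*D)*(bb*SQd*SRd + SRn*SQd) - (A*B*D)*(Li*SQn*SRd)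
     = A*SQd*(SRn*(B*D) - A*N*SRd) + SRd*(A*(bb*B*D + N*A)*SQd - SQn*(Li*(B*(A*D))))"
    by (simp add: algebra_simps)
  thus ?thesis using h1 h2 by simp
qed



lemma degree_lin_power: "degree (lin a ^ k) = k"
proof (induction k)
  case (Suc k)
  have "lin a ^ k \<noteq> 0" using mnc_power[OF mnc_lin, of a k] by (auto simp: mnc_def)
  thus ?case using mnc_mult_degree(1)[OF mnc_lin, of "lin a ^ k" a] Suc by simp
qed simp

lemma sum_deg:
  fixes f :: "'b \<Rightarrow> 'a::comm_ring_1 poly"
  shows "(\<And>x. x \<in> S \<Longrightarrow> f x = 0 \<or> degree (f x) < K) \<Longrightarrow> sum f S = 0 \<or> degree (sum f S) < K"
proof (induction S rule: infinite_finite_induct)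
  case (insert x F)
  have h1: "f x = 0 \<or> degree (f x) < K" using insert by simp
  have h2: "sum f F = 0 \<or> degree (sum f F) < K" using insert by simp
  have "sum f (insert x F) = f x + sum f F" using insert by simp
  moreover have "degree (f x + sum f F) \<le> max (degree (f x)) (degree (sum f F))"
    by (rule degree_add_le_max)
  ultimately show ?case using h1 h2 by (cases "f x = 0"; cases "sum f F = 0") auto
qed auto

lemma notdvd_num:
  assumes "0 < degree c" shows "\<not> lin a dvd fst (negpart a c)"
proof
  assume d: "lin a dvd fst (negpart a c)"
  obtain Z where Z: "fst (negpart a c) = [:coeff c (degree c):] + lin a * Z"
    using negpart_num by blast
  have "lin a dvd [:coeff c (degree c):]"
    using dvd_diff[OF d dvd_triv_left[of "lin a" Z]] Z by simp
  hence "coeff c (degree c) = 0" by (rule lin_dvd_const)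
  hence "c = 0" by simp
  thus False using assms by simp
qed

lemma lpow_swap: "fst (lpow a m) = snd (lpow a (- m))"
  unfolding lpow_def by auto

lemma mnc_lpow: "mnc (fst (lpow a m))" "mnc (snd (lpow a m))"
  unfolding lpow_def by (auto simp: mnc_power mnc_lin mnc_one)



lemma lpow_swap2: "snd (lpow a m) = fst (lpow a (- m))"
  unfolding lpow_def by auto

theorem lemma6p1:
  fixes l :: "nat \<Rightarrow> 'q::nontriv mod_ring"
    and d i :: nat and b :: "'q mod_ring"
    and m :: "nat \<Rightarrow> int" and R :: "'q mod_ring frac"
    and Rp Qp :: "nat \<Rightarrow> 'q mod_ring poly"
  assumes d3: "d \<ge> 3"
    and l_unit: "\<forall>k\<in>{1..d-1}. invertible_el (l k)"
    and l_inj: "inj_on l {1..d-1}"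
    and l_diff: "\<forall>j\<in>{1..d-1}. \<forall>k\<in>{1..d-1}. j \<noteq> k \<longrightarrow> invertible_el (l j - l k)"
    and i: "i \<in> {1..d-1}"
    and R: "in_Rd l d R"
    and decR: "is_decomp l d (fmul (fprod {1..d-1} (\<lambda>k. lpow (l k) (- m k))) R) Rp"
    and decQ: "is_decomp l d
        (fmul (lpow (l i) (-1)) (fmul (fprod {1..d-1} (\<lambda>k. lpow (l k) (- m k)))
           (fadd (fmul (fpoly [:b:]) (fprod {1..d-1} (\<lambda>k. lpow (l k) (m k)))) R))) Qp"
  shows "(\<forall>n\<in>{1..d-1}. n \<noteq> i \<longrightarrow> min_deg (Qp n) = min_deg (Rp n))
       \<and> (degree (Rp d) \<ge> 1 \<longrightarrow> min_deg (Qp d) = min_deg (Rp d) + 1)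
       \<and> (Rp i \<noteq> 0 \<longrightarrow> min_deg (Qp i) = min_deg (Rp i) - 1)"
proof -
  define I where "I = {1..d}"
  define J where "J = {1..d-1}"
  define L where "L = (\<lambda>k. lin (l k))"
  define fR where "fR = (\<lambda>n. dpart l d n (Rp n))"
  define fQ where "fQ = (\<lambda>n. dpart l d n (Qp n))"
  define SRn where "SRn = fst (fsum I fR)"
  define SRd where "SRd = snd (fsum I fR)"
  define SQn where "SQn = fst (fsum I fQ)"
  define SQd where "SQd = snd (fsum I fQ)"
  define A where "A = fst (fprod J (\<lambda>k. lpow (l k) (- m k)))"
  define B where "B = snd (fprod J (\<lambda>k. lpow (l k) (- m k)))"
  have finI: "finite I" by (simp add: I_def)
  have dI: "d \<in> I" using d3 by (simp add: I_def)
  have IJ: "I - {d} = J" using d3 by (auto simp: I_def J_def)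
  have JI: "J \<subseteq> I" by (auto simp: I_def J_def)
  have Jnd: "n \<in> J \<Longrightarrow> n \<noteq> d" for n using d3 by (auto simp: J_def)
  have iJ: "i \<in> J" using i by (simp add: J_def)
  have A2: "fst (fprod J (\<lambda>k. lpow (l k) (m k))) = B"
    unfolding B_def fprod_def by (simp add: lpow_swap)
  have B2: "snd (fprod J (\<lambda>k. lpow (l k) (m k))) = A"
    unfolding A_def fprod_def by (simp add: lpow_swap2)
  have mA: "mnc A" unfolding A_def fprod_def by (simp add: mnc_prod mnc_lpow)
  have mB: "mnc B" unfolding B_def fprod_def by (simp add: mnc_prod mnc_lpow)
  obtain e where De: "snd R = (\<Prod>k\<in>J. lin (l k) ^ e k)"
    using R by (auto simp: in_Rd_def J_def)
  have mD: "mnc (snd R)" unfolding De by (simp add: mnc_prod mnc_power mnc_lin)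
  have fRJ: "n \<in> J \<Longrightarrow> fR n = negpart (l n) (Rp n)" for n using Jnd by (simp add: fR_def dpart_def)
  have fQJ: "n \<in> J \<Longrightarrow> fQ n = negpart (l n) (Qp n)" for n using Jnd by (simp add: fQ_def dpart_def)
  have fRd: "fR d = (Rp d, 1)" by (simp add: fR_def dpart_def fpoly_def)
  have fQd: "fQ d = (Qp d, 1)" by (simp add: fQ_def dpart_def fpoly_def)
  have sfR: "n \<in> J \<Longrightarrow> snd (fR n) = L n ^ degree (Rp n)" for n
    using fRJ by (simp add: negpart_def L_def)
  have sfQ: "n \<in> J \<Longrightarrow> snd (fQ n) = L n ^ degree (Qp n)" for n
    using fQJ by (simp add: negpart_def L_def)
  have msfR: "n \<in> I \<Longrightarrow> mnc (snd (fR n))" for n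
    using sfR fRd IJ by (cases "n = d") (auto simp: mnc_one mnc_power mnc_lin L_def)
  have msfQ: "n \<in> I \<Longrightarrow> mnc (snd (fQ n))" for n
    using sfQ fQd IJ by (cases "n = d") (auto simp: mnc_one mnc_power mnc_lin L_def)
  have mSRd: "mnc SRd" unfolding SRd_def fsum_def using msfR by (simp add: mnc_prod)
  have mSQd: "mnc SQd" unfolding SQd_def fsum_def using msfQ by (simp add: mnc_prod)
  have c0R: "n \<in> J \<Longrightarrow> coeff (Rp n) 0 = 0" for n using decR by (simp add: is_decomp_def J_def)
  have c0Q: "n \<in> J \<Longrightarrow> coeff (Qp n) 0 = 0" for n using decQ by (simp add: is_decomp_def J_def)
  have eqR: "A * fst R * SRd = SRn * (B * snd R)"
    using decR unfolding is_decomp_def frac_eq_def fmul_def A_def B_def SRd_def SRn_def fR_def I_def J_def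
    by simp
  have eqQ: "A * ([:b:] * B * snd R + fst R * A) * SQd = SQn * (L i * (B * (A * snd R)))"
    using decQ unfolding is_decomp_def frac_eq_def fmul_def fadd_def fpoly_def
    using A2 B2 unfolding A_def B_def SQd_def SQn_def fQ_def I_def J_def L_def
    by (simp add: lpow_def algebra_simps)
  have key: "[:b:]*SQd*SRd + SRn*SQd = L i * SQn * SRd"
    using alg3[OF eqR eqQ] mnc_cancel_eq[of "A*B*snd R"] mA mB mD by (simp add: mnc_mult)
  have copLL: "j \<in> J \<Longrightarrow> k \<in> J \<Longrightarrow> j \<noteq> k \<Longrightarrow> cpr (L j) (L k)" for j k
  proof -
    assume jk: "j \<in> J" "k \<in> J" "j \<noteq> k"
    have "invertible_el (l j - l k)" using l_diff jk unfolding J_def by blast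
    then obtain u where "(l j - l k) * u = 1" by (auto simp: invertible_el_def)
    thus ?thesis unfolding L_def by (rule cpr_lin)
  qed
  have main: "L n ^ (degree (Rp n) + degree (Qp n)) dvd
       L n ^ degree (Qp n) * fst (negpart (l n) (Rp n)) - L n ^ degree (Rp n) * (L i * fst (negpart (l n) (Qp n)))"
    if n: "n \<in> J" for n
  proof -
    define a where "a = degree (Rp n)"
    define bq where "bq = degree (Qp n)"
    define NR where "NR = fst (negpart (l n) (Rp n))"
    define NQ where "NQ = fst (negpart (l n) (Qp n))"
    define WR where "WR = (\<Prod>m\<in>I - {n}. snd (fR m))"
    define WQ where "WQ = (\<Prod>m\<in>I - {n}. snd (fQ m))"
    have nI: "n \<in> I" using n JI by auto
    obtain YR where e1: "SRn = NR * WR + L n ^ a * YR" and e2: "SRd = L n ^ a * WR"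
      using fsum_split[OF finI nI, of fR] fRJ[OF n] sfR[OF n]
      unfolding SRn_def SRd_def NR_def WR_def a_def by auto
    obtain YQ where e3: "SQn = NQ * WQ + L n ^ bq * YQ" and e4: "SQd = L n ^ bq * WQ"
      using fsum_split[OF finI nI, of fQ] fQJ[OF n] sfQ[OF n]
      unfolding SQn_def SQd_def NQ_def WQ_def bq_def by auto
    have "[:b:]*(L n ^ bq*WQ)*(L n ^ a*WR) + (NR*WR + L n ^ a*YR)*(L n ^ bq*WQ)
        = L i*(NQ*WQ + L n ^ bq*YQ)*(L n ^ a*WR)"
      using key unfolding e1 e2 e3 e4 .
    from alg1[OF this]
    have "L n ^ a * L n ^ bq dvd (WR*WQ) * (L n ^ bq * NR - L n ^ a * (L i * NQ))"
      by (rule dvdI)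
    hence dv: "L n ^ (a + bq) dvd (WR*WQ) * (L n ^ bq * NR - L n ^ a * (L i * NQ))"
      by (simp add: power_add)
    have cm: "m \<in> I - {n} \<Longrightarrow> cpr (snd (fR m)) (L n) \<and> cpr (snd (fQ m)) (L n)" for m
    proof -
      assume m: "m \<in> I - {n}"
      show ?thesis
      proof (cases "m = d")
        case True thus ?thesis using fRd fQd by (simp add: cpr_one)
      next
        case False
        hence mJ: "m \<in> J" using m IJ by auto
        have "cpr (L m) (L n)" using copLL[OF mJ n] m by auto
        thus ?thesis using sfR[OF mJ] sfQ[OF mJ] by (simp add: cpr_power)
      qed
    qed
    have cw: "cpr (WR * WQ) (L n)" unfolding WR_def WQ_def
      by (intro cpr_mult cpr_prod) (use cm in auto)
    have "cpr (WR * WQ) (L n ^ (a + bq))" by (rule cpr_sym[OF cpr_power[OF cpr_sym[OF cw]]])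
    from cpr_dvd[OF this dv] show ?thesis unfolding a_def bq_def NR_def NQ_def .
  qed
  have num_nd: "0 < degree c \<Longrightarrow> \<not> L n dvd fst (negpart (l n) c)" for n c
    unfolding L_def by (rule notdvd_num)
  have P1: "n \<in> J \<Longrightarrow> n \<noteq> i \<Longrightarrow> degree (Qp n) = degree (Rp n)" for n
  proof -
    assume n: "n \<in> J" and ni: "n \<noteq> i"
    have cp: "cpr (L i) (L n)" using copLL[OF iJ n] ni by auto
    have h1: "lin (l n) ^ (degree (Rp n) + degree (Qp n)) dvd
        lin (l n) ^ degree (Qp n) * fst (negpart (l n) (Rp n)) - lin (l n) ^ degree (Rp n) * (L i * fst (negpart (l n) (Qp n)))"
      using main[OF n] unfolding L_def by simp
    have h2: "0 < degree (Rp n) \<Longrightarrow> \<not> lin (l n) dvd fst (negpart (l n) (Rp n))"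
      by (rule notdvd_num)
    have h3: "0 < degree (Qp n) \<Longrightarrow> \<not> lin (l n) dvd L i * fst (negpart (l n) (Qp n))"
    proof
      assume pos: "0 < degree (Qp n)" and dv: "lin (l n) dvd L i * fst (negpart (l n) (Qp n))"
      have "L n dvd fst (negpart (l n) (Qp n))" using cpr_dvd[OF cp] dv unfolding L_def by blast
      thus False using num_nd[OF pos, of n] by blast
    qed
    show ?thesis by (rule core0[OF h1 h2 h3])
  qed
  have P3: "Rp i \<noteq> 0 \<Longrightarrow> degree (Qp i) = degree (Rp i) + 1"
  proof -
    assume nz: "Rp i \<noteq> 0"
    have apos: "0 < degree (Rp i)"
    proof (rule ccontr)
      assume "\<not> 0 < degree (Rp i)"
      hence "degree (Rp i) = 0" by simp
      hence "Rp i = [:coeff (Rp i) 0:]" by (rule degree_0_id[symmetric])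
      thus False using nz c0R[OF iJ] by simp
    qed
    have pw: "lin (l i) ^ (degree (Rp i) + 1) * fst (negpart (l i) (Qp i))
        = L i ^ degree (Rp i) * (L i * fst (negpart (l i) (Qp i)))"
      unfolding L_def by (simp add: mult.assoc mult.commute)
    have h1: "lin (l i) ^ (degree (Rp i) + degree (Qp i)) dvd
        lin (l i) ^ degree (Qp i) * fst (negpart (l i) (Rp i)) - lin (l i) ^ (degree (Rp i) + 1) * fst (negpart (l i) (Qp i))"
      unfolding pw using main[OF iJ] unfolding L_def .
    have h2: "0 < degree (Rp i) \<Longrightarrow> \<not> lin (l i) dvd fst (negpart (l i) (Rp i))"
      by (rule notdvd_num)
    have h3: "0 < degree (Qp i) \<Longrightarrow> \<not> lin (l i) dvd fst (negpart (l i) (Qp i))"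
      by (rule notdvd_num)
    show ?thesis by (rule core1[OF h1 h2 h3 apos])
  qed
  have Tbound: "\<And>k. k \<in> I - {d} \<Longrightarrow> fst (f k) * (\<Prod>m\<in>I - {k} - {d}. snd (f m)) = 0
        \<or> degree (fst (f k) * (\<Prod>m\<in>I - {k} - {d}. snd (f m))) < degree (\<Prod>m\<in>I - {d}. snd (f m))"
    if fJ: "\<And>n. n \<in> J \<Longrightarrow> f n = negpart (l n) (P n)" and c0: "\<And>n. n \<in> J \<Longrightarrow> coeff (P n) 0 = 0"
      and mf: "\<And>n. n \<in> I \<Longrightarrow> mnc (snd (f n))"
    for f :: "nat \<Rightarrow> 'q mod_ring frac" and P
  proof -
    fix k assume k: "k \<in> I - {d}"
    hence kJ: "k \<in> J" using IJ by simp
    define W where "W = (\<Prod>m\<in>I - {k} - {d}. snd (f m))"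
    have mW: "mnc W" unfolding W_def by (intro mnc_prod) (use mf in auto)
    hence W0: "W \<noteq> 0" by (auto simp: mnc_def)
    have eqS: "(\<Prod>m\<in>I - {d}. snd (f m)) = snd (f k) * W"
      unfolding W_def using k finI by (subst prod.remove[of _ k]) (auto simp: Diff_insert2[symmetric] insert_commute intro!: prod.cong)
    have sk: "snd (f k) = lin (l k) ^ degree (P k)" using fJ[OF kJ] by (simp add: negpart_def)
    have dS: "degree (snd (f k) * W) = degree (P k) + degree W"
      using mnc_mult_degree(1)[OF _ W0, of "snd (f k)"] sk by (simp add: mnc_power mnc_lin degree_lin_power)
    have nb: "fst (f k) = 0 \<or> degree (fst (f k)) < degree (P k)"
      using negpart_num_degree[OF c0[OF kJ], of "l k"] fJ[OF kJ] by simp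
    show "fst (f k) * W = 0 \<or> degree (fst (f k) * W) < degree (\<Prod>m\<in>I - {d}. snd (f m))"
    proof (cases "fst (f k) = 0")
      case False
      hence "degree (fst (f k)) < degree (P k)" using nb by simp
      hence "degree (fst (f k) * W) < degree (P k) + degree W"
        using degree_mult_le[of "fst (f k)" W] by linarith
      thus ?thesis unfolding eqS dS by simp
    qed simp
  qed
  define TR where "TR = (\<Sum>k\<in>I - {d}. fst (fR k) * (\<Prod>m\<in>I - {k} - {d}. snd (fR m)))"
  define TQ where "TQ = (\<Sum>k\<in>I - {d}. fst (fQ k) * (\<Prod>m\<in>I - {k} - {d}. snd (fQ m)))"
  have sRd: "SRd = (\<Prod>m\<in>I - {d}. snd (fR m))" using fsum_split(2)[OF finI dI, of fR] fRd
    unfolding SRd_def by simp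
  have sQd: "SQd = (\<Prod>m\<in>I - {d}. snd (fQ m))" using fsum_split(2)[OF finI dI, of fQ] fQd
    unfolding SQd_def by simp
  have sRn: "SRn = Rp d * SRd + TR" using fsum_split(1)[OF finI dI, of fR] fRd sRd
    unfolding SRn_def TR_def by simp
  have sQn: "SQn = Qp d * SQd + TQ" using fsum_split(1)[OF finI dI, of fQ] fQd sQd
    unfolding SQn_def TQ_def by simp
  have TRb: "TR = 0 \<or> degree TR < degree SRd"
    unfolding TR_def sRd by (rule sum_deg, rule Tbound[OF fRJ c0R msfR])
  have TQb: "TQ = 0 \<or> degree TQ < degree SQd"
    unfolding TQ_def sQd by (rule sum_deg, rule Tbound[OF fQJ c0Q msfQ])
  define \<Delta> where "\<Delta> = L i * Qp d - Rp d - [:b:]"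
  have eD: "\<Delta> * (SQd * SRd) = TR * SQd - L i * TQ * SRd"
    unfolding \<Delta>_def by (rule alg2) (use key in \<open>simp only: sRn sQn\<close>)
  have SR0: "SRd \<noteq> 0" using mSRd by (auto simp: mnc_def)
  have K: "degree (SQd * SRd) = degree SQd + degree SRd"
    by (rule mnc_mult_degree(1)[OF mSQd SR0])
  have b1: "degree (TR * SQd) \<le> degree SQd + degree SRd"
  proof (cases "TR = 0")
    case False thus ?thesis using TRb degree_mult_le[of TR SQd] by linarith
  qed simp
  have b2: "degree (L i * TQ * SRd) \<le> degree SQd + degree SRd"
  proof (cases "TQ = 0")
    case False
    have "degree (L i * TQ * SRd) \<le> degree (L i * TQ) + degree SRd" by (rule degree_mult_le)
    moreover have "degree (L i * TQ) \<le> degree (L i) + degree TQ" by (rule degree_mult_le)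
    ultimately show ?thesis using TQb False by (simp add: L_def)
  qed simp
  have dD: "degree \<Delta> = 0"
  proof (rule ccontr)
    assume nz: "degree \<Delta> \<noteq> 0"
    hence "\<Delta> \<noteq> 0" by auto
    hence "degree ((SQd * SRd) * \<Delta>) = degree (SQd * SRd) + degree \<Delta>"
      using mnc_mult_degree(1)[OF mnc_mult[OF mSQd mSRd]] by blast
    moreover have "degree (\<Delta> * (SQd * SRd)) \<le> degree SQd + degree SRd"
      unfolding eD by (rule degree_diff_le[OF b1 b2])
    ultimately show False using K nz by (simp add: mult.commute)
  qed
  have P2: "degree (Rp d) \<ge> 1 \<Longrightarrow> degree (Qp d) + 1 = degree (Rp d)"
  proof -
    assume r1: "degree (Rp d) \<ge> 1"
    define c where "c = [:b:] + \<Delta>"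
    have dc: "degree c = 0" unfolding c_def using dD
      by (metis degree_add_le degree_pCons_0 le_zero_eq)
    have "L i * Qp d = Rp d + c" unfolding c_def \<Delta>_def by simp
    moreover have "degree (Rp d + c) = degree (Rp d)"
      using dc r1 by (intro degree_add_eq_left) simp
    ultimately have e: "degree (L i * Qp d) = degree (Rp d)" by simp
    have "Qp d \<noteq> 0" using e r1 by auto
    hence "degree (L i * Qp d) = 1 + degree (Qp d)"
      using mnc_mult_degree(1)[OF mnc_lin] by (simp add: L_def)
    thus ?thesis using e by simp
  qed
  show ?thesis
  proof (intro conjI impI ballI)
    fix n assume "n \<in> {1..d-1}" "n \<noteq> i"
    thus "min_deg (Qp n) = min_deg (Rp n)" using P1 by (simp add: min_deg_eq J_def)
  next
    assume "degree (Rp d) \<ge> 1"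
    thus "min_deg (Qp d) = min_deg (Rp d) + 1" using P2 by (simp add: min_deg_eq)
  next
    assume "Rp i \<noteq> 0"
    thus "min_deg (Qp i) = min_deg (Rp i) - 1" using P3 by (simp add: min_deg_eq)
  qed
qed

end
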